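(* Let $L>0$. There exist a probability density $q$ on $\mathbb R^p\times(0,\infty)\times(0,\infty)^p\times(0,\infty)$ and a constant $\varepsilon>0$ such that for every $\tilde\lambda^2\in[1/L,L]^p$, $$p(\beta,\sigma^2,\nu,\tau^2\mid\tilde\lambda^2)\ge\varepsilon\,q(\beta,\sigma^2,\nu,\tau^2)$$ for all $(\beta,\sigma^2,\nu,\tau^2)$, where $p(\cdot\mid\tilde\lambda^2)$ is the joint density of the output $(\beta,\sigma^2,\nu,\tau^2)$ of step (1) of Algorithm 1 given $\tilde\lambda^2$.
   Context: Let $n,p\ge 1$, $y\in\mathbb R^n$, $X\in\mathbb R^{n\times p}$ with $X^\top X$ invertible, $a',b'>0$, and $a,b,c>0$. Let $\pi_\tau(t)=t^{a-1}(c+t)^{-(a+b)}/C(a,b,c)$ for $t>0$, where $C(a,b,c)=\int_0^\infty t^{a-1}(c+t)^{-(a+b)}\,dt$. $\mathrm{IG}(\alpha,\beta)$ denotes the inverse gamma distribution with density $\beta^\alpha x^{-\alpha-1}e^{-\beta/x}/\Gamma(\alpha)$, $x>0$. For $v\in(0,\infty)^p$ put $\Psi(v)=\mathrm{diag}(1/v_1,\dots,1/v_p)$. Algorithm 1 is the Markov chain with state $(\beta,\sigma^2,\tilde\lambda^2,\tau^2,\nu)\in\mathbb R^p\times(0,\infty)\times(0,\infty)^p\times(0,\infty)\times(0,\infty)^p$. One iteration, given the current $\tilde\lambda^2$ and with $\Psi=\Psi(\tilde\lambda^2)$, does: (1) draw $\sigma^2\sim\mathrm{IG}\big(n/2+a',\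 \{\|y\|^2-y^\top X(X^\top X+\Psi)^{-1}X^\top y\}/2+b'\big)$, then $\beta\sim N_p\big((X^\top X+\Psi)^{-1}X^\top y,\ \sigma^2(X^\top X+\Psi)^{-1}\big)$; independently draw $\tau^2$ from the density on $(0,\infty)$ proportional to $t\mapsto \pi_\tau(t)\prod_{k=1}^p t^{1/2}/(\tilde\lambda_k^2+t)$, and then, independently for $k=1,\dots,p$, $\nu_k\sim\mathrm{IG}(1,\,1+\tau^2/\tilde\lambda_k^2)$; (2) independently for $k=1,\dots,p$, draw the new $\tilde\lambda_k^2\sim \mathrm{IG}\big(1,\ \beta_k^2/(2\sigma^2)+\tau^2/\nu_k\big)$. *)

theory Defs
  imports "HOL-Analysis.Analysis"
begin

definition ig_density :: "real \<Rightarrow> real \<Rightarrow> real \<Rightarrow> real" where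
  "ig_density \<alpha> \<beta> x =
     (if 0 < x then \<beta> powr \<alpha> * x powr (- \<alpha> - 1) * exp (- \<beta> / x) / Gamma \<alpha> else 0)"

definition mvn_density :: "real^'p \<Rightarrow> real^'p^'p \<Rightarrow> real^'p \<Rightarrow> real" where
  "mvn_density m S x =
     (2 * pi) powr (- real CARD('p) / 2) * det S powr (- 1 / 2)
     * exp (- ((x - m) \<bullet> (matrix_inv S *v (x - m))) / 2)"

definition Psi :: "real^'p \<Rightarrow> real^'p^'p" where
  "Psi v = (\<chi> i j. if i = j then 1 / v $ i else 0)"

definition C_const :: "real \<Rightarrow> real \<Rightarrow> real \<Rightarrow> real" where
  "C_const a b c = (LINT t:{0<..}|lborel. t powr (a - 1) * (c + t) powr (- (a + b)))"

definition pi_tau :: "real \<Rightarrow> real \<Rightarrow> real \<Rightarrow> real \<Rightarrow> real" where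
  "pi_tau a b c t = t powr (a - 1) * (c + t) powr (- (a + b)) / C_const a b c"

definition tau_unnorm :: "real \<Rightarrow> real \<Rightarrow> real \<Rightarrow> real^'p \<Rightarrow> real \<Rightarrow> real" where
  "tau_unnorm a b c lam t = pi_tau a b c t * (\<Prod>k\<in>UNIV. t powr (1/2) / (lam $ k + t))"

definition tau_density :: "real \<Rightarrow> real \<Rightarrow> real \<Rightarrow> real^'p \<Rightarrow> real \<Rightarrow> real" where
  "tau_density a b c lam t =
     (if 0 < t then tau_unnorm a b c lam t / (LINT s:{0<..}|lborel. tau_unnorm a b c lam s) else 0)"

definition post_mean :: "real^'n \<Rightarrow> real^'p^'n \<Rightarrow> real^'p \<Rightarrow> real^'p" where
  "post_mean y X lam = matrix_inv (transpose X ** X + Psi lam) *v (transpose X *v y)"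

definition sigma_rate :: "real^'n \<Rightarrow> real^'p^'n \<Rightarrow> real \<Rightarrow> real^'p \<Rightarrow> real" where
  "sigma_rate y X b' lam = (y \<bullet> y - y \<bullet> (X *v post_mean y X lam)) / 2 + b'"

definition step1_dens ::
  "real^'n \<Rightarrow> real^'p^'n \<Rightarrow> real \<Rightarrow> real \<Rightarrow> real \<Rightarrow> real \<Rightarrow> real \<Rightarrow> real^'p
   \<Rightarrow> real^'p \<Rightarrow> real \<Rightarrow> real^'p \<Rightarrow> real \<Rightarrow> real" where
  "step1_dens y X a' b' a b c lam \<beta> s \<nu> t =
       ig_density (real CARD('n) / 2 + a') (sigma_rate y X b' lam) s
       * (if 0 < s then mvn_density (post_mean y X lam)
                          (s *\<^sub>R matrix_inv (transpose X ** X + Psi lam)) \<beta> else 0)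
       * tau_density a b c lam t
       * (\<Prod>k\<in>UNIV. ig_density 1 (1 + t / lam $ k) (\<nu> $ k))"

definition step1_density ::
  "real^'n \<Rightarrow> real^'p^'n \<Rightarrow> real \<Rightarrow> real \<Rightarrow> real \<Rightarrow> real \<Rightarrow> real \<Rightarrow> real^'p
   \<Rightarrow> ((real^'p) \<times> real \<times> (real^'p) \<times> real) \<Rightarrow> real" where
  "step1_density y X a' b' a b c lam z =
     step1_dens y X a' b' a b c lam (fst z) (fst (snd z)) (fst (snd (snd z))) (snd (snd (snd z)))"

definition state_domain :: "((real^'p) \<times> real \<times> (real^'p) \<times> real) set" where
  "state_domain = {(\<beta>, s, \<nu>, t). 0 < s \<and> (\<forall>k. 0 < \<nu> $ k) \<and> 0 < t}"

definition is_prob_density :: "((real^'p) \<times> real \<times> (real^'p) \<times> real \<Rightarrow> real) \<Rightarrow> bool" where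
  "is_prob_density q \<longleftrightarrow> q \<in> borel_measurable lborel \<and> (\<forall>z. 0 \<le> q z)
     \<and> (\<forall>z. z \<notin> state_domain \<longrightarrow> q z = 0)
     \<and> (\<integral>\<^sup>+ z. ennreal (q z) \<partial>lborel) = 1"

end

theory Submission
  imports Defs
begin


lemma mv_add: "((B::real^'p^'m) + C) *v x = B *v x + C *v x"
  by (simp add: matrix_vector_mult_def vec_eq_iff sum.distrib algebra_simps)

lemma mv_scale: "((c::real) *\<^sub>R (B::real^'p^'m)) *v x = c *\<^sub>R (B *v x)"
  by (simp add: matrix_vector_mult_def vec_eq_iff sum_distrib_left algebra_simps)

lemma Psi_mv: "Psi lam *v x = (\<chi> k. x $ k / lam $ k)"
proof -
  have "(\<Sum>j\<in>UNIV. (if k = j then 1 / lam $ k else 0) * x $ j) = x $ k / lam $ k" for k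
  proof -
    have "(\<lambda>j. (if k = j then 1 / lam $ k else 0) * x $ j) = (\<lambda>j. if k = j then x $ k / lam $ k else 0)"
      by auto
    thus ?thesis by (simp only:) simp
  qed
  then show ?thesis by (simp add: Psi_def matrix_vector_mult_def vec_eq_iff)
qed

lemma Psi_transpose: "transpose (Psi lam) = Psi lam"
  by (simp add: Psi_def transpose_def vec_eq_iff)

lemma quad_Psi: "x \<bullet> (Psi lam *v x) = (\<Sum>k\<in>UNIV. (x$k)^2 / lam$k)"
  by (simp add: Psi_mv inner_vec_def power2_eq_square)

lemma quad_XX: "x \<bullet> ((transpose X ** X) *v x) = (X *v x) \<bullet> ((X::real^'p^'n) *v x)"
  by (metis dot_lmul_matrix matrix_vector_mul_assoc transpose_matrix_vector inner_commute)

lemma quad_A: "x \<bullet> ((transpose X ** X + Psi lam) *v x) = (X *v x) \<bullet> ((X::real^'p^'n) *v x) + (\<Sum>k\<in>UNIV. (x$k)^2 / lam$k)"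
  by (simp add: mv_add inner_add_right quad_XX quad_Psi)

lemma sym_A: "transpose (transpose X ** X + Psi lam) = transpose X ** (X::real^'p^'n) + Psi lam"
proof -
  have t: "transpose (A + B) = transpose A + transpose (B::real^'p^'p)" for A B
    by (simp add: transpose_def vec_eq_iff)
  show ?thesis by (simp add: t matrix_transpose_mul Psi_transpose)
qed

lemma sym_inner: assumes "transpose A = (A::real^'p^'p)" shows "u \<bullet> (A *v v) = v \<bullet> (A *v u)"
proof -
  have "u \<bullet> (A *v v) = (u v* A) \<bullet> v" by (simp add: dot_lmul_matrix)
  also have "u v* A = A *v u" by (metis assms vector_transpose_matrix)
  finally show ?thesis by (simp add: inner_commute)
qed

lemma matrix_inv_props: assumes "invertible (M::real^'p^'p)"
  shows "M ** matrix_inv M = mat 1" "matrix_inv M ** M = mat 1"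
proof -
  from assms obtain B where "M ** B = mat 1 \<and> B ** M = mat 1" unfolding invertible_def by blast
  hence "M ** matrix_inv M = mat 1 \<and> matrix_inv M ** M = mat 1"
    unfolding matrix_inv_def by (rule someI)
  thus "M ** matrix_inv M = mat 1" "matrix_inv M ** M = mat 1" by auto
qed

lemma matrix_inv_unique: assumes "(M::real^'p^'p) ** B = mat 1" shows "matrix_inv M = B"
proof -
  have inv: "invertible M" using assms invertible_right_inverse by blast
  have "matrix_inv M = matrix_inv M ** (M ** B)" using assms by simp
  also have "\<dots> = B" by (simp add: matrix_mul_assoc matrix_inv_props[OF inv])
  finally show ?thesis .
qed

lemma det_scale: "det ((c::real) *\<^sub>R (B::real^'p^'p)) = c ^ CARD('p) * det B"
  by (simp add: det_def prod.distrib sum_distrib_left algebra_simps)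

lemma continuous_on_det:
  assumes "\<And>i j. continuous_on S (\<lambda>x. M x $ i $ j :: real)"
  shows "continuous_on S (\<lambda>x. det (M x :: real^'p^'p))"
  unfolding det_def by (intro continuous_intros assms)



abbreviation AA :: "real^'p^'n \<Rightarrow> real^'p \<Rightarrow> real^'p^'p" where
  "AA X lam \<equiv> transpose X ** X + Psi lam"

lemma quad_pos:
  assumes lam: "\<forall>k. 0 < lam $ k" and x: "x \<noteq> 0"
  shows "0 < x \<bullet> (AA X lam *v x)"
proof -
  obtain k where k: "x $ k \<noteq> 0" using x by (auto simp: vec_eq_iff)
  have "0 < (x$k)^2 / lam$k" using k lam by (simp add: divide_pos_pos)
  also have "\<dots> \<le> (\<Sum>k\<in>UNIV. (x$k)^2 / lam$k)"
    by (rule member_le_sum) (use lam in \<open>auto intro: divide_nonneg_pos\<close>)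
  finally show ?thesis unfolding quad_A by (simp add: add_nonneg_pos)
qed

lemma quad_nonneg:
  assumes lam: "\<forall>k. 0 < lam $ k"
  shows "0 \<le> x \<bullet> (AA X lam *v x)"
  using quad_pos[OF lam, of x X] by (cases "x = 0") auto

lemma A_invertible:
  assumes lam: "\<forall>k. 0 < lam $ k"
  shows "invertible (AA X lam)"
proof -
  have "\<forall>x. AA X lam *v x = 0 \<longrightarrow> x = 0"
    using quad_pos[OF lam] by (metis inner_zero_right less_irrefl)
  thus ?thesis unfolding invertible_left_inverse matrix_left_invertible_ker .
qed

lemma det_A_pos:
  assumes lam: "\<forall>k. 0 < lam $ k"
  shows "0 < det (AA X lam)"
proof -
  define M where "M t = (1 - t) *\<^sub>R mat 1 + t *\<^sub>R AA X lam" for t :: real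
  have inv: "det (M t) \<noteq> 0" if t: "0 \<le> t" "t \<le> 1" for t
  proof -
    have "\<forall>x. M t *v x = 0 \<longrightarrow> x = 0"
    proof (intro allI impI, rule ccontr)
      fix x assume 0: "M t *v x = 0" and x: "x \<noteq> 0"
      have q: "x \<bullet> (M t *v x) = (1 - t) * (x \<bullet> x) + t * (x \<bullet> (AA X lam *v x))"
        by (simp add: M_def mv_add mv_scale inner_add_right)
      have "0 < x \<bullet> x" using x by simp
      moreover have "0 < x \<bullet> (AA X lam *v x)" by (rule quad_pos[OF lam x])
      ultimately have "0 < (1 - t) * (x \<bullet> x) + t * (x \<bullet> (AA X lam *v x))"
        using t by (cases "t = 1") (auto intro: add_pos_nonneg)
      with q 0 show False by simp
    qed
    hence "invertible (M t)" unfolding invertible_left_inverse matrix_left_invertible_ker .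
    thus ?thesis by (simp add: invertible_det_nz)
  qed
  have cont: "continuous_on {0..1} (\<lambda>t. det (M t))"
    by (rule continuous_on_det) (simp add: M_def, intro continuous_intros)
  have "M 0 = mat 1" "M 1 = AA X lam" by (simp_all add: M_def)
  show ?thesis
  proof (rule ccontr)
    assume "\<not> 0 < det (AA X lam)"
    hence "det (M 1) \<le> 0" "0 \<le> det (M 0)" using \<open>M 0 = mat 1\<close> \<open>M 1 = AA X lam\<close> by auto
    from IVT2'[of "\<lambda>t. det (M t)", OF this _ cont] obtain t where "0 \<le> t" "t \<le> 1" "det (M t) = 0"
      by auto
    with inv show False by blast
  qed
qed

lemma det_A_lower:
  assumes L: "0 < L"
  shows "\<exists>\<delta>>0. \<forall>lam::real^'p. (\<forall>k. 1 / L \<le> lam $ k \<and> lam $ k \<le> L) \<longrightarrow> \<delta> \<le> det (AA (X::real^'p^'n) lam)"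
proof -
  define B :: "(real^'p) set" where "B = cbox (\<chi> k. 1 / L) (\<chi> k. L)"
  have Bc: "lam \<in> B \<longleftrightarrow> (\<forall>k. 1 / L \<le> lam $ k \<and> lam $ k \<le> L)" for lam
    by (simp add: B_def mem_box_cart)
  have pos: "lam \<in> B \<Longrightarrow> \<forall>k. 0 < lam $ k" for lam
    using L by (auto simp: Bc intro: less_le_trans[of 0 "1/L"])
  show ?thesis
  proof (cases "B = {}")
    case True
    have F: "\<And>lam::real^'p. (\<forall>k. 1 / L \<le> lam $ k \<and> lam $ k \<le> L) \<Longrightarrow> False"
      using True Bc by blast
    show ?thesis
    proof (intro exI[of _ "1::real"] conjI allI impI)
      fix lam :: "real^'p" assume "\<forall>k. 1 / L \<le> lam $ k \<and> lam $ k \<le> L"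
      from F[OF this] show "1 \<le> det (AA X lam)" ..
    qed simp
  next
    case False
    hence ne: "B \<noteq> {}" .
  have cont: "continuous_on B (\<lambda>lam. det (AA X lam))"
  proof (rule continuous_on_det)
    fix i j
    show "continuous_on B (\<lambda>lam. AA X lam $ i $ j)"
      unfolding Psi_def using pos
      by (cases "i = j") (auto intro!: continuous_intros simp: less_imp_neq[symmetric])
  qed
  obtain l where l: "l \<in> B" "\<forall>y\<in>B. det (AA X l) \<le> det (AA X y)"
    using continuous_attains_inf[OF _ ne cont] B_def by auto
  show ?thesis
    by (rule exI[of _ "det (AA X l)"]) (use l det_A_pos[OF pos[OF l(1)]] Bc in auto)
qed
qed



lemma A_post_mean:
  assumes lam: "\<forall>k. 0 < lam $ k"
  shows "AA X lam *v post_mean y X lam = transpose X *v y"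
  unfolding post_mean_def
  by (simp add: matrix_vector_mul_assoc matrix_inv_props[OF A_invertible[OF lam]])

lemma yXm:
  assumes lam: "\<forall>k. 0 < lam $ k"
  shows "y \<bullet> (X *v post_mean y X lam) = post_mean y X lam \<bullet> (AA X lam *v post_mean y X lam)"
proof -
  have "y \<bullet> (X *v post_mean y X lam) = (y v* X) \<bullet> post_mean y X lam" by (simp add: dot_lmul_matrix)
  also have "\<dots> = (transpose X *v y) \<bullet> post_mean y X lam" by simp
  finally show ?thesis by (simp add: A_post_mean[OF lam] inner_commute)
qed

lemma rate_identity:
  assumes lam: "\<forall>k. 0 < lam $ k"
  shows "y \<bullet> y - y \<bullet> (X *v post_mean y X lam) =
     (y - X *v post_mean y X lam) \<bullet> (y - X *v post_mean y X lam)
     + (\<Sum>k\<in>UNIV. (post_mean y X lam $ k)^2 / lam $ k)"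
proof -
  let ?m = "post_mean y X lam"
  have 1: "y \<bullet> (X *v ?m) = (X *v ?m) \<bullet> (X *v ?m) + (\<Sum>k\<in>UNIV. (?m $ k)^2 / lam $ k)"
    by (simp only: yXm[OF lam] quad_A)
  have 2: "(y - X *v ?m) \<bullet> (y - X *v ?m) = y \<bullet> y - 2 * (y \<bullet> (X *v ?m)) + (X *v ?m) \<bullet> (X *v ?m)"
    by (simp add: inner_diff_left inner_diff_right inner_commute)
  show ?thesis using 1 2 by simp
qed

lemma sumsq_nonneg:
  fixes lam :: "real^'p"
  assumes lam: "\<forall>k. 0 < lam $ k"
  shows "0 \<le> (\<Sum>k\<in>UNIV. (m $ k)^2 / lam $ k)"
  by (intro sum_nonneg divide_nonneg_pos) (simp_all add: lam)

lemma yXm_bounds: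
  assumes lam: "\<forall>k. 0 < lam $ k"
  shows "0 \<le> y \<bullet> (X *v post_mean y X lam)" "y \<bullet> (X *v post_mean y X lam) \<le> y \<bullet> y"
proof -
  show "0 \<le> y \<bullet> (X *v post_mean y X lam)" unfolding yXm[OF lam] by (rule quad_nonneg[OF lam])
  have "0 \<le> (y - X *v post_mean y X lam) \<bullet> (y - X *v post_mean y X lam)" by simp
  thus "y \<bullet> (X *v post_mean y X lam) \<le> y \<bullet> y"
    using rate_identity[OF lam, of y X] sumsq_nonneg[OF lam, of "post_mean y X lam"] by linarith
qed

lemma rate_bounds:
  assumes lam: "\<forall>k. 0 < lam $ k"
  shows "b' \<le> sigma_rate y X b' lam" "sigma_rate y X b' lam \<le> y \<bullet> y / 2 + b'"
  using yXm_bounds[OF lam, of y X] unfolding sigma_rate_def by auto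

lemma quad_sym_bound:
  assumes lam: "\<forall>k. 0 < lam $ k"
  shows "(u - v) \<bullet> (AA X lam *v (u - v)) \<le> 2 * (u \<bullet> (AA X lam *v u)) + 2 * (v \<bullet> (AA X lam *v v))"
proof -
  have s: "v \<bullet> (AA X lam *v u) = u \<bullet> (AA X lam *v v)" by (rule sym_inner[OF sym_A])
  have "0 \<le> (u + v) \<bullet> (AA X lam *v (u + v))" by (rule quad_nonneg[OF lam])
  moreover have "(u + v) \<bullet> (AA X lam *v (u + v)) + (u - v) \<bullet> (AA X lam *v (u - v))
      = 2 * (u \<bullet> (AA X lam *v u)) + 2 * (v \<bullet> (AA X lam *v v))"
    by (simp add: matrix_vector_right_distrib matrix_vector_mult_diff_distrib inner_add_left inner_add_right
        inner_diff_left inner_diff_right s)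
  ultimately show ?thesis by linarith
qed



lemma mat_scale_mult: "((c::real) *\<^sub>R (B::real^'p^'p)) ** (d *\<^sub>R C) = (c * d) *\<^sub>R (B ** C)"
  by (simp add: vec_eq_iff matrix_matrix_mult_def sum_distrib_left algebra_simps)

lemma mvn_nonneg: "0 \<le> mvn_density m S x"
  unfolding mvn_density_def by simp

lemma X_bound: "\<exists>K>0. \<forall>x. norm ((X::real^'p^'n) *v x) \<le> norm x * K"
  using bounded_linear.pos_bounded[OF matrix_vector_mul_bounded_linear[of X]] by blast

lemma mvn_lower:
  assumes L: "0 < L"
  shows "\<exists>K>0. \<forall>(lam::real^'p) (\<beta>::real^'p) s. (\<forall>k. 1 / L \<le> lam $ k \<and> lam $ k \<le> L)
     \<longrightarrow> (\<forall>k. 0 \<le> \<beta> $ k \<and> \<beta> $ k \<le> 1) \<longrightarrow> 1 \<le> s \<longrightarrow> s \<le> 2 \<longrightarrow>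
     K \<le> mvn_density (post_mean y X lam) (s *\<^sub>R matrix_inv (AA (X::real^'p^'n) lam)) \<beta>"
proof -
  obtain \<delta> where \<delta>: "\<delta> > 0" "\<And>lam::real^'p. (\<forall>k. 1 / L \<le> lam $ k \<and> lam $ k \<le> L) \<Longrightarrow> \<delta> \<le> det (AA X lam)"
    using det_A_lower[OF L, of X] by blast
  obtain KX where KX: "KX > 0" "\<And>x. norm (X *v x) \<le> norm x * KX" using X_bound[of X] by blast
  define P where "P = real CARD('p)"
  define Qm where "Qm = 2 * ((P * KX)^2 + P * L) + 2 * (y \<bullet> y)"
  define K where "K = (2 * pi) powr (- P / 2) * (2 ^ CARD('p) / \<delta>) powr (-1/2) * exp (- Qm / 2)"
  have Kpos: "K > 0" unfolding K_def using \<delta> by simp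
  show ?thesis
  proof (intro exI[of _ K] conjI allI impI Kpos)
    fix lam \<beta> :: "real^'p" and s :: real
    assume box: "\<forall>k. 1 / L \<le> lam $ k \<and> lam $ k \<le> L" and b: "\<forall>k. 0 \<le> \<beta> $ k \<and> \<beta> $ k \<le> 1"
      and s1: "1 \<le> s" and s2: "s \<le> 2"
    have lam: "\<forall>k. 0 < lam $ k" using box L by (auto intro: less_le_trans[of 0 "1/L"])
    let ?A = "AA X lam" and ?m = "post_mean y X lam"
    have inv: "invertible ?A" by (rule A_invertible[OF lam])
    have dA: "\<delta> \<le> det ?A" using \<delta>(2)[OF box] .
    have dApos: "0 < det ?A" using \<delta>(1) dA by linarith
    have mi: "matrix_inv (s *\<^sub>R matrix_inv ?A) = (1 / s) *\<^sub>R ?A"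
      by (rule matrix_inv_unique) (use s1 in \<open>simp add: mat_scale_mult matrix_inv_props[OF inv]\<close>)
    have dinv: "det (matrix_inv ?A) * det ?A = 1"
      using det_mul[of "matrix_inv ?A" ?A] matrix_inv_props(2)[OF inv] by simp
    have dS: "det (s *\<^sub>R matrix_inv ?A) = s ^ CARD('p) / det ?A"
      using dinv dApos by (simp add: det_scale field_simps)
    have dSpos: "0 < det (s *\<^sub>R matrix_inv ?A)" using dS dApos s1 by simp
    have dSle: "det (s *\<^sub>R matrix_inv ?A) \<le> 2 ^ CARD('p) / \<delta>"
    proof -
      have "s ^ CARD('p) / det ?A \<le> 2 ^ CARD('p) / det ?A"
        using s1 s2 dApos by (intro divide_right_mono power_mono) auto
      also have "\<dots> \<le> 2 ^ CARD('p) / \<delta>" using dA \<delta>(1) by (intro divide_left_mono) auto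
      finally show ?thesis using dS by simp
    qed
    have pw: "(2 ^ CARD('p) / \<delta>) powr (-1/2) \<le> det (s *\<^sub>R matrix_inv ?A) powr (-1/2)"
      by (rule powr_mono2'[OF _ dSpos dSle]) simp
    have nb: "norm \<beta> \<le> P"
    proof -
      have "norm \<beta> \<le> (\<Sum>i\<in>UNIV. \<bar>\<beta> $ i\<bar>)" by (rule norm_le_l1_cart)
      also have "\<dots> \<le> (\<Sum>i\<in>(UNIV::'p set). 1)" using b by (intro sum_mono) auto
      finally show ?thesis by (simp add: P_def)
    qed
    have Xb: "(X *v \<beta>) \<bullet> (X *v \<beta>) \<le> (P * KX)^2"
    proof -
      have "norm (X *v \<beta>) \<le> P * KX" using KX(2)[of \<beta>] nb KX(1)
        by (metis mult_right_mono order_trans less_imp_le)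
      hence "(norm (X *v \<beta>))^2 \<le> (P * KX)^2" by (intro power_mono) auto
      thus ?thesis by (simp add: power2_norm_eq_inner)
    qed
    have sb: "(\<Sum>k\<in>UNIV. (\<beta>$k)^2 / lam$k) \<le> P * L"
    proof -
      have "(\<Sum>k\<in>UNIV. (\<beta>$k)^2 / lam$k) \<le> (\<Sum>k\<in>(UNIV::'p set). L)"
      proof (intro sum_mono)
        fix k
        have "(\<beta>$k)^2 \<le> 1" using b by (simp add: power_le_one abs_le_iff)
        have "(\<beta>$k)^2 / lam$k \<le> 1 / lam $ k"
          using \<open>(\<beta>$k)^2 \<le> 1\<close> lam by (intro divide_right_mono) (auto simp: less_imp_le)
        also have "1 / lam $ k \<le> L" using box lam L by (simp add: divide_le_eq mult.commute)
        finally show "(\<beta>$k)^2 / lam$k \<le> L" .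
      qed
      thus ?thesis by (simp add: P_def)
    qed
    have qb: "\<beta> \<bullet> (?A *v \<beta>) \<le> (P * KX)^2 + P * L" unfolding quad_A using Xb sb by linarith
    have qm: "?m \<bullet> (?A *v ?m) \<le> y \<bullet> y" using yXm[OF lam, of y X] yXm_bounds(2)[OF lam, of y X] by simp
    define Q where "Q = (\<beta> - ?m) \<bullet> (?A *v (\<beta> - ?m))"
    have Q0: "0 \<le> Q" unfolding Q_def by (rule quad_nonneg[OF lam])
    have QQ: "Q \<le> Qm" unfolding Q_def Qm_def
      by (rule order_trans[OF quad_sym_bound[OF lam, of \<beta> ?m X]], intro add_mono mult_left_mono qb qm) auto
    have ex: "(\<beta> - ?m) \<bullet> (matrix_inv (s *\<^sub>R matrix_inv ?A) *v (\<beta> - ?m)) = Q / s"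
      unfolding mi Q_def by (simp add: mv_scale)
    have "Q / s \<le> Q" using Q0 s1 by (simp add: divide_le_eq mult_le_cancel_left1)
    hence e: "exp (- Qm / 2) \<le> exp (- (Q / s) / 2)" using QQ by simp
    show "K \<le> mvn_density ?m (s *\<^sub>R matrix_inv ?A) \<beta>"
      unfolding mvn_density_def K_def P_def ex
      by (intro mult_mono pw e) auto
  qed
qed



lemma set_integrable_lborel_bound:
  fixes f g :: "real \<Rightarrow> real"
  assumes S: "S \<in> sets borel" and cf: "continuous_on S f" and g: "g integrable_on S"
    and bd: "\<And>x. x \<in> S \<Longrightarrow> \<bar>f x\<bar> \<le> g x"
  shows "set_integrable lborel S f"
proof -
  have Sl: "S \<in> sets lebesgue" using S by simp
  have "f absolutely_integrable_on S"
    by (rule measurable_bounded_by_integrable_imp_absolutely_integrable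
          [OF continuous_imp_measurable_on_sets_lebesgue[OF cf Sl] Sl g]) (use bd in auto)
  hence "integrable lebesgue (\<lambda>x. indicator S x *\<^sub>R f x)" unfolding set_integrable_def .
  moreover have "(\<lambda>x. indicator S x *\<^sub>R f x) \<in> borel_measurable lborel"
    using borel_measurable_continuous_on_indicator[OF S cf] by simp
  ultimately show ?thesis unfolding set_integrable_def using integrable_completion by blast
qed

lemma set_integral_lower:
  fixes g :: "real \<Rightarrow> real"
  assumes gi: "set_integrable lborel {0<..} g" and g0: "\<And>t. 0 < t \<Longrightarrow> 0 \<le> g t"
    and gm: "\<And>t. 1 \<le> t \<Longrightarrow> t \<le> 2 \<Longrightarrow> m \<le> g t"
  shows "m \<le> (LINT t:{0<..}|lborel. g t)"
proof -
  have gi2: "set_integrable lborel {1..2} g"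
    by (rule set_integrable_subset[OF gi]) auto
  have "m = (LINT t:{1..2::real}|lborel. m)" by (simp add: set_integral_const)
  also have "\<dots> \<le> (LINT t:{1..2}|lborel. g t)"
    by (rule set_integral_mono) (use gi2 gm in \<open>auto simp: set_integrable_def\<close>)
  also have "\<dots> \<le> (LINT t:{0<..}|lborel. g t)"
    unfolding set_lebesgue_integral_def
    by (rule integral_mono) (use gi2 gi g0 in \<open>auto simp: set_integrable_def indicator_def\<close>)
  finally show ?thesis .
qed

definition hh :: "real \<Rightarrow> real \<Rightarrow> real \<Rightarrow> real \<Rightarrow> real" where
  "hh a b c t = t powr (a - 1) * (c + t) powr (- (a + b))"

lemma hh_integrable:
  assumes a: "0 < a" and b: "0 < b" and c: "0 < c"
  shows "set_integrable lborel {0<..} (hh a b c)"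
proof -
  have i1: "set_integrable lborel {0<..1} (hh a b c)"
  proof (rule set_integrable_lborel_bound)
    show "continuous_on {0<..1} (hh a b c)" unfolding hh_def using c
      by (intro continuous_intros) auto
    show "(\<lambda>t. of_real (c powr (- (a + b))) * t powr (a - 1)) integrable_on {0<..1}"
      by (intro integrable_on_cmult_left integrable_on_powr_from_0') (use a in auto)
    fix t :: real assume t: "t \<in> {0<..1}"
    have "(c + t) powr (- (a + b)) \<le> c powr (- (a + b))"
      by (rule powr_mono2') (use a b c t in auto)
    hence "t powr (a - 1) * (c + t) powr (- (a + b)) \<le> t powr (a - 1) * c powr (- (a + b))"
      by (intro mult_left_mono) auto
    thus "\<bar>hh a b c t\<bar> \<le> of_real (c powr (- (a + b))) * t powr (a - 1)"
      unfolding hh_def by (simp add: mult.commute)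
  qed simp
  have i2: "set_integrable lborel {1..} (hh a b c)"
  proof (rule set_integrable_lborel_bound)
    show "continuous_on {1..} (hh a b c)" unfolding hh_def using c
      by (intro continuous_intros) auto
    show "(\<lambda>t. t powr (-1 - b)) integrable_on {1..}"
      using has_integral_powr_to_inf[of "-1 - b" 1] b unfolding integrable_on_def by auto
    fix t :: real assume t: "t \<in> {1..}"
    have "(c + t) powr (- (a + b)) \<le> t powr (- (a + b))"
      by (rule powr_mono2') (use a b c t in auto)
    hence "t powr (a - 1) * (c + t) powr (- (a + b)) \<le> t powr (a - 1) * t powr (- (a + b))"
      by (intro mult_left_mono) auto
    also have "\<dots> = t powr (-1 - b)" by (simp flip: powr_add)
    finally show "\<bar>hh a b c t\<bar> \<le> t powr (-1 - b)"
      unfolding hh_def by simp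
  qed simp
  have "set_integrable lborel ({0<..1} \<union> {1..}) (hh a b c)"
    by (rule set_integrable_Un[OF i1 i2]) auto
  moreover have "{0<..1} \<union> {1..} = {0::real<..}" by auto
  ultimately show ?thesis by simp
qed

lemma hh_lower:
  assumes a: "0 < a" and b: "0 < b" and c: "0 < c" and t: "1 \<le> t" "t \<le> 2"
  shows "min 1 (2 powr (a - 1)) * (c + 2) powr (- (a + b)) \<le> hh a b c t"
proof -
  have 1: "min 1 (2 powr (a - 1)) \<le> t powr (a - 1)"
  proof (cases "a \<ge> 1")
    case True
    hence "1 powr (a - 1) \<le> t powr (a - 1)" by (intro powr_mono2) (use t in auto)
    thus ?thesis by simp
  next
    case False
    hence "2 powr (a - 1) \<le> t powr (a - 1)" by (intro powr_mono2') (use t in auto)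
    thus ?thesis by simp
  qed
  have 2: "(c + 2) powr (- (a + b)) \<le> (c + t) powr (- (a + b))"
    by (rule powr_mono2') (use a b c t in auto)
  show ?thesis unfolding hh_def by (intro mult_mono 1 2) auto
qed

lemma hh_nonneg: "0 \<le> hh a b c t" unfolding hh_def by simp



lemma C_eq: "C_const a b c = (LINT t:{0<..}|lborel. hh a b c t)"
  unfolding C_const_def hh_def ..

lemma C_pos: assumes "0 < a" "0 < b" "0 < c" shows "0 < C_const a b c"
proof -
  have "min 1 (2 powr (a - 1)) * (c + 2) powr (- (a + b)) \<le> C_const a b c"
    unfolding C_eq
    by (rule set_integral_lower[OF hh_integrable[OF assms] hh_nonneg hh_lower[OF assms]])
  moreover have "0 < min 1 (2 powr (a - 1)) * (c + 2) powr (- (a + b))" using assms by simp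
  ultimately show ?thesis by linarith
qed

lemma tau_unnorm_eq: "tau_unnorm a b c lam t = hh a b c t / C_const a b c * (\<Prod>k\<in>UNIV. t powr (1/2) / (lam $ k + t))"
  unfolding tau_unnorm_def pi_tau_def hh_def ..

lemma Pr_upper:
  fixes lam :: "real^'p"
  assumes box: "\<forall>k. 1 / L \<le> lam $ k \<and> lam $ k \<le> L" and L: "0 < L" and t: "0 < t"
  shows "(\<Prod>k\<in>UNIV. t powr (1/2) / (lam $ k + t)) \<le> (1 / min (1/L) 1) ^ CARD('p)"
proof -
  have "(\<Prod>k\<in>UNIV. t powr (1/2) / (lam $ k + t)) \<le> (\<Prod>k\<in>(UNIV::'p set). 1 / min (1/L) 1)"
  proof (rule prod_mono, intro conjI)
    fix k
    have lk: "1/L \<le> lam $ k" using box by auto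
    have l0: "0 < lam $ k" using lk L by (meson less_le_trans zero_less_divide_1_iff)
    show "0 \<le> t powr (1/2) / (lam $ k + t)" using l0 t by simp
    have sq: "t powr (1/2) \<le> 1 + t"
    proof -
      have "t powr (1/2) = sqrt t" using t by (simp add: powr_half_sqrt)
      also have "sqrt t \<le> 1 + t"
      proof -
        have "t \<le> (1 + t)^2" using t by (simp add: power2_eq_square algebra_simps)
        hence "sqrt t \<le> sqrt ((1 + t)^2)" by (rule real_sqrt_le_mono)
        thus ?thesis using t by simp
      qed
      finally show ?thesis .
    qed
    define m where "m = min (1/L) 1"
    have m0: "0 < m" using L by (simp add: m_def)
    have "m * (1 + t) \<le> lam $ k + t"
    proof -
      have "m * (1 + t) = m + m * t" by (simp add: algebra_simps)
      also have "\<dots> \<le> lam $ k + t" using lk t by (intro add_mono) (auto simp: m_def min_le_iff_disj mult_le_cancel_right1)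
      finally show ?thesis .
    qed
    hence "t powr (1/2) / (lam $ k + t) \<le> (1 + t) / (m * (1 + t))"
      using sq m0 t l0 by (intro frac_le) auto
    also have "\<dots> = 1 / m" using t by simp
    finally show "t powr (1/2) / (lam $ k + t) \<le> 1 / min (1/L) 1" by (simp add: m_def)
  qed
  thus ?thesis by simp
qed

lemma Pr_lower:
  fixes lam :: "real^'p"
  assumes box: "\<forall>k. 1 / L \<le> lam $ k \<and> lam $ k \<le> L" and L: "0 < L" and t: "1 \<le> t" "t \<le> 2"
  shows "(1 / (L + 2)) ^ CARD('p) \<le> (\<Prod>k\<in>UNIV. t powr (1/2) / (lam $ k + t))"
proof -
  have "(\<Prod>k\<in>(UNIV::'p set). 1 / (L + 2)) \<le> (\<Prod>k\<in>UNIV. t powr (1/2) / (lam $ k + t))"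
  proof (rule prod_mono, intro conjI)
    fix k
    have l0: "0 < lam $ k" using box L by (meson less_le_trans zero_less_divide_1_iff)
    show "0 \<le> 1 / (L + 2)" using L by simp
    have "1 powr (1/2) \<le> t powr (1/2)" by (rule powr_mono2) (use t in auto)
    hence "1 \<le> t powr (1/2)" by simp
    moreover have "lam $ k + t \<le> L + 2" using box t by (simp add: add_mono)
    ultimately show "1 / (L + 2) \<le> t powr (1/2) / (lam $ k + t)"
      using l0 t by (intro frac_le) auto
  qed
  thus ?thesis by simp
qed



lemma tau_bounds:
  assumes a: "0 < a" and b: "0 < b" and c: "0 < c" and L: "0 < L"
  shows "\<exists>K>0. \<forall>lam::real^'p. (\<forall>k. 1 / L \<le> lam $ k \<and> lam $ k \<le> L) \<longrightarrow>
     (\<forall>t. 0 \<le> tau_density a b c lam t) \<and> (\<forall>t. 1 \<le> t \<longrightarrow> t \<le> 2 \<longrightarrow> K \<le> tau_density a b c lam t)"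
proof -
  define C where "C = C_const a b c"
  have C0: "0 < C" unfolding C_def by (rule C_pos[OF a b c])
  define hm where "hm = min 1 (2 powr (a - 1)) * (c + 2) powr (- (a + b))"
  have hm0: "0 < hm" unfolding hm_def using c by simp
  define Kl where "Kl = (1 / min (1/L) 1) ^ CARD('p)"
  have Kl0: "0 < Kl" unfolding Kl_def using L by simp
  define m0 where "m0 = hm / C * (1 / (L + 2)) ^ CARD('p)"
  have m00: "0 < m0" unfolding m0_def using hm0 C0 L by simp
  show ?thesis
  proof (intro exI[of _ "m0 / Kl"] conjI allI impI)
    show "0 < m0 / Kl" using m00 Kl0 by simp
    fix lam :: "real^'p" assume box: "\<forall>k. 1 / L \<le> lam $ k \<and> lam $ k \<le> L"
    have l0: "\<And>k. 0 < lam $ k" using box L by (meson less_le_trans zero_less_divide_1_iff)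
    let ?U = "tau_unnorm a b c lam"
    let ?Pr = "\<lambda>t. (\<Prod>k\<in>UNIV. t powr (1/2) / (lam $ k + t))"
    have U: "?U t = hh a b c t / C * ?Pr t" for t unfolding tau_unnorm_eq C_def ..
    have Pr0: "0 < t \<Longrightarrow> 0 \<le> ?Pr t" for t using l0 by (intro prod_nonneg) (simp add: add_pos_pos less_imp_le)
    have U0: "0 < t \<Longrightarrow> 0 \<le> ?U t" for t unfolding U using C0 Pr0 hh_nonneg by simp
    have Ub: "0 < t \<Longrightarrow> ?U t \<le> Kl / C * hh a b c t" for t
    proof -
      assume t: "0 < t"
      have "?U t = hh a b c t / C * ?Pr t" by (rule U)
      also have "\<dots> \<le> hh a b c t / C * Kl" unfolding Kl_def
        by (rule mult_left_mono[OF Pr_upper[OF box L t]]) (use C0 hh_nonneg in simp)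
      finally show ?thesis by (simp add: mult.commute)
    qed
    have hi: "set_integrable lborel {0<..} (hh a b c)" by (rule hh_integrable[OF a b c])
    have hi2: "set_integrable lborel {0<..} (\<lambda>t. Kl / C * hh a b c t)"
      using hi unfolding set_integrable_def by (simp add: mult.left_commute)
    have cU: "continuous_on {0<..} ?U"
      unfolding tau_unnorm_eq hh_def using l0 C0 c unfolding C_def
      by (intro continuous_intros) (auto simp: add_pos_pos less_imp_neq[symmetric])
    have Ui: "set_integrable lborel {0<..} ?U"
      unfolding set_integrable_def
    proof (rule Bochner_Integration.integrable_bound[OF hi2[unfolded set_integrable_def]])
      show "(\<lambda>x. indicator {0<..} x *\<^sub>R ?U x) \<in> borel_measurable lborel"
        using borel_measurable_continuous_on_indicator[OF _ cU] by simp
      show "AE x in lborel. norm (indicator {0<..} x *\<^sub>R ?U x) \<le> norm (indicator {0<..} x *\<^sub>R (Kl / C * hh a b c x))"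
        using U0 Ub Kl0 C0 hh_nonneg by (auto simp: indicator_def)
    qed
    define I where "I = (LINT s:{0<..}|lborel. ?U s)"
    have Iu: "I \<le> Kl"
    proof -
      have "I \<le> (LINT s:{0<..}|lborel. Kl / C * hh a b c s)"
        unfolding I_def by (rule set_integral_mono[OF Ui hi2]) (use Ub in auto)
      also have "\<dots> = Kl / C * C" unfolding C_def C_eq by simp
      finally show ?thesis using C0 by simp
    qed
    have Ul: "1 \<le> t \<Longrightarrow> t \<le> 2 \<Longrightarrow> m0 \<le> ?U t" for t
    proof -
      assume t: "1 \<le> t" "t \<le> 2"
      have "m0 = hm / C * (1 / (L + 2)) ^ CARD('p)" by (simp add: m0_def)
      also have "\<dots> \<le> hh a b c t / C * ?Pr t"
        by (intro mult_mono divide_right_mono Pr_lower[OF box L t])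
           (use hh_lower[OF a b c t] C0 hm0 hh_nonneg Pr0[of t] t L in \<open>auto simp: hm_def\<close>)
      finally show ?thesis using U by simp
    qed
    have Il: "m0 \<le> I" unfolding I_def by (rule set_integral_lower[OF Ui U0 Ul])
    have I0: "0 < I" using Il m00 by linarith
    have td: "tau_density a b c lam t = (if 0 < t then ?U t / I else 0)" for t
      unfolding tau_density_def I_def ..
    fix t :: real
    show "0 \<le> tau_density a b c lam t" unfolding td using U0 I0 by simp
    assume t: "1 \<le> t" "t \<le> 2"
    have "m0 / Kl \<le> ?U t / Kl" using Ul[OF t] Kl0 by (simp add: divide_right_mono)
    also have "\<dots> \<le> ?U t / I" using I0 Iu U0[of t] t by (intro divide_left_mono) auto
    finally show "m0 / Kl \<le> tau_density a b c lam t" unfolding td using t by simp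
  qed
qed



lemma Gamma_pos: "0 < (x::real) \<Longrightarrow> 0 < Gamma x"
  by (simp add: Gamma_real_pos_exp)

lemma ig_nonneg: "0 < \<alpha> \<Longrightarrow> 0 \<le> ig_density \<alpha> \<beta> x"
  unfolding ig_density_def using Gamma_pos[of \<alpha>] by simp

lemma ig_lower:
  assumes al: "0 < \<alpha>" and r: "r1 \<le> r" "r \<le> r2" "0 < r1" and x: "1 \<le> x" "x \<le> 2"
  shows "r1 powr \<alpha> * 2 powr (- \<alpha> - 1) * exp (- r2) / Gamma \<alpha> \<le> ig_density \<alpha> r x"
proof -
  have 1: "r1 powr \<alpha> \<le> r powr \<alpha>" by (rule powr_mono2) (use al r in auto)
  have 2: "2 powr (- \<alpha> - 1) \<le> x powr (- \<alpha> - 1)" by (rule powr_mono2') (use al x in auto)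
  have "r / x \<le> r" using x r by (simp add: divide_le_eq mult_le_cancel_left1)
  hence 3: "exp (- r2) \<le> exp (- r / x)" using r by simp
  have "r1 powr \<alpha> * 2 powr (- \<alpha> - 1) * exp (- r2) \<le> r powr \<alpha> * x powr (- \<alpha> - 1) * exp (- r / x)"
    by (intro mult_mono 1 2 3) auto
  thus ?thesis unfolding ig_density_def using x Gamma_pos[OF al] by (simp add: divide_right_mono)
qed

lemma ones_basis: "\<forall>b\<in>(Basis :: (real^'p) set). (\<chi> k. 1) \<bullet> b = 1"
  by (auto simp: Basis_vec_def inner_axis)

lemma pair_basis: "\<forall>b\<in>Basis. (x::'a::euclidean_space) \<bullet> b = 1 \<Longrightarrow> \<forall>b\<in>Basis. (y::'b::euclidean_space) \<bullet> b = 1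
   \<Longrightarrow> \<forall>b\<in>Basis. (x, y) \<bullet> b = 1"
  by (auto simp: Basis_prod_def)

definition cube :: "((real^'p) \<times> real \<times> (real^'p) \<times> real) set" where
  "cube = cbox (0, 1, (\<chi> k. 1), 1) ((\<chi> k. 1), 2, (\<chi> k. 2), 2)"

lemma mem_cube: "(\<beta>, s, \<nu>, t) \<in> cube \<longleftrightarrow> (\<forall>k. 0 \<le> \<beta> $ k \<and> \<beta> $ k \<le> 1) \<and> 1 \<le> s \<and> s \<le> 2
   \<and> (\<forall>k. 1 \<le> \<nu> $ k \<and> \<nu> $ k \<le> 2) \<and> 1 \<le> t \<and> t \<le> 2"
  by (simp add: cube_def cbox_Pair_eq mem_box_cart)

lemma cube_measure: "emeasure lborel (cube :: ((real^'p) \<times> real \<times> (real^'p) \<times> real) set) = 1"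
proof -
  have d: "((\<chi> k. 1), (2::real), (\<chi> k. 2), (2::real)) - (0, 1, (\<chi> k. 1), 1) = ((\<chi> k. 1)::real^'p, 1::real, (\<chi> k. 1)::real^'p, 1::real)"
    by (simp add: vec_eq_iff)
  have r: "\<forall>b\<in>(Basis::real set). 1 \<bullet> b = 1" by simp
  have all: "\<forall>b\<in>Basis. ((\<chi> k. 1)::real^'p, 1::real, (\<chi> k. 1)::real^'p, 1::real) \<bullet> b = 1"
    by (intro pair_basis ones_basis r)
  have "\<forall>b\<in>Basis. (0::real^'p, 1::real, (\<chi> k. 1)::real^'p, 1::real) \<bullet> b \<le> ((\<chi> k. 1), 2, (\<chi> k. 2), 2) \<bullet> b"
  proof
    fix b :: "(real^'p) \<times> real \<times> (real^'p) \<times> real" assume b: "b \<in> Basis"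
    have "(((\<chi> k. 1), (2::real), (\<chi> k. 2), (2::real)) - (0, 1, (\<chi> k. 1), 1)) \<bullet> b = 1"
      unfolding d using all b by blast
    thus "(0::real^'p, 1::real, (\<chi> k. 1)::real^'p, 1::real) \<bullet> b \<le> ((\<chi> k. 1), 2, (\<chi> k. 2), 2) \<bullet> b"
      by (simp only: inner_diff_left)
  qed
  thus ?thesis unfolding cube_def emeasure_lborel_cbox_eq d using all by simp
qed

lemma nn_ind1: "S \<in> sets lborel \<Longrightarrow> emeasure lborel S = 1 \<Longrightarrow> (\<integral>\<^sup>+ z. ennreal (indicator S z) \<partial>lborel) = 1"
  by (simp add: ennreal_indicator)

lemma cube_prob: "is_prob_density (indicator cube :: (real^'p) \<times> real \<times> (real^'p) \<times> real \<Rightarrow> real)"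
proof -
  have cb: "cube \<in> sets (lborel :: ((real^'p) \<times> real \<times> (real^'p) \<times> real) measure)"
    unfolding cube_def by simp
  have sub: "(cube :: ((real^'p) \<times> real \<times> (real^'p) \<times> real) set) \<subseteq> state_domain"
  proof
    fix z :: "(real^'p) \<times> real \<times> (real^'p) \<times> real" assume "z \<in> cube"
    then obtain \<beta> s \<nu> t where z: "z = (\<beta>, s, \<nu>, t)" and m: "(\<beta>, s, \<nu>, t) \<in> cube" by (cases z) auto
    from m[unfolded mem_cube] show "z \<in> state_domain" unfolding z state_domain_def
      by (auto intro: less_le_trans[of 0 1])
  qed
  show ?thesis unfolding is_prob_density_def
  proof (intro conjI allI impI)
    show "indicator cube \<in> borel_measurable lborel" by (rule borel_measurable_indicator) (simp add: cube_def)
    show "(\<integral>\<^sup>+ z. ennreal (indicator cube z) \<partial>lborel) = 1"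
      by (rule nn_ind1) (simp_all add: cube_def cube_measure[unfolded cube_def])
  qed (use sub in \<open>auto simp: indicator_def\<close>)
qed



theorem mainTheorem5:
  fixes y :: "real^'n" and X :: "real^'p^'n"
    and a' b' a b c L :: real
  assumes "invertible (transpose X ** X)"
    and "0 < a'" and "0 < b'" and "0 < a" and "0 < b" and "0 < c"
    and "0 < L"
  shows "\<exists>q \<epsilon>. is_prob_density q \<and> 0 < \<epsilon> \<and>
     (\<forall>lam :: real^'p. (\<forall>k. 1 / L \<le> lam $ k \<and> lam $ k \<le> L) \<longrightarrow>
        (\<forall>z. step1_density y X a' b' a b c lam z \<ge> \<epsilon> * q z))"
proof -
  note a' = assms(2) and b' = assms(3) and a = assms(4) and b = assms(5) and c = assms(6) and L = assms(7)
  obtain Km where Km: "Km > 0" "\<And>(lam::real^'p) (\<beta>::real^'p) s. (\<forall>k. 1 / L \<le> lam $ k \<and> lam $ k \<le> L)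
     \<Longrightarrow> (\<forall>k. 0 \<le> \<beta> $ k \<and> \<beta> $ k \<le> 1) \<Longrightarrow> 1 \<le> s \<Longrightarrow> s \<le> 2 \<Longrightarrow>
     Km \<le> mvn_density (post_mean y X lam) (s *\<^sub>R matrix_inv (AA X lam)) \<beta>"
    using mvn_lower[OF L, of y X] by blast
  obtain Kt where Kt: "Kt > 0" "\<And>lam::real^'p. (\<forall>k. 1 / L \<le> lam $ k \<and> lam $ k \<le> L) \<Longrightarrow>
     (\<forall>t. 0 \<le> tau_density a b c lam t) \<and> (\<forall>t. 1 \<le> t \<longrightarrow> t \<le> 2 \<longrightarrow> Kt \<le> tau_density a b c lam t)"
    using tau_bounds[OF a b c L] by blast
  define \<alpha> where "\<alpha> = real CARD('n) / 2 + a'"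
  have \<alpha>0: "0 < \<alpha>" unfolding \<alpha>_def using a' by simp
  define Ks where "Ks = b' powr \<alpha> * 2 powr (- \<alpha> - 1) * exp (- (y \<bullet> y / 2 + b')) / Gamma \<alpha>"
  have Ks0: "0 < Ks" unfolding Ks_def using b' Gamma_pos[OF \<alpha>0] by simp
  define Kn where "Kn = (1::real) powr 1 * 2 powr (- 1 - 1) * exp (- (1 + 2 * L)) / Gamma 1"
  have Kn0: "0 < Kn" unfolding Kn_def by simp
  define \<epsilon> where "\<epsilon> = Ks * Km * Kt * Kn ^ CARD('p)"
  have \<epsilon>0: "0 < \<epsilon>" unfolding \<epsilon>_def using Ks0 Km(1) Kt(1) Kn0 by simp
  show ?thesis
  proof (intro exI[of _ "indicator cube"] exI[of _ \<epsilon>] conjI cube_prob \<epsilon>0 allI impI)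
    fix lam :: "real^'p" and z :: "(real^'p) \<times> real \<times> (real^'p) \<times> real"
    assume box: "\<forall>k. 1 / L \<le> lam $ k \<and> lam $ k \<le> L"
    have lam: "\<forall>k. 0 < lam $ k" using box L by (meson less_le_trans zero_less_divide_1_iff)
    obtain \<beta> s \<nu> t where z: "z = (\<beta>, s, \<nu>, t)" by (cases z) auto
    have sd: "step1_density y X a' b' a b c lam z =
       ig_density \<alpha> (sigma_rate y X b' lam) s
       * (if 0 < s then mvn_density (post_mean y X lam) (s *\<^sub>R matrix_inv (AA X lam)) \<beta> else 0)
       * tau_density a b c lam t
       * (\<Prod>k\<in>UNIV. ig_density 1 (1 + t / lam $ k) (\<nu> $ k))"
      unfolding step1_density_def step1_dens_def z \<alpha>_def by simp
    have n1: "0 \<le> ig_density \<alpha> (sigma_rate y X b' lam) s" by (rule ig_nonneg[OF \<alpha>0])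
    have n2: "0 \<le> (if 0 < s then mvn_density (post_mean y X lam) (s *\<^sub>R matrix_inv (AA X lam)) \<beta> else 0)"
      by (simp add: mvn_nonneg)
    have n3: "0 \<le> tau_density a b c lam t" using Kt(2)[OF box] by blast
    have n4: "0 \<le> (\<Prod>k\<in>UNIV. ig_density 1 (1 + t / lam $ k) (\<nu> $ k))"
      by (intro prod_nonneg) (simp add: ig_nonneg)
    show "\<epsilon> * indicator cube z \<le> step1_density y X a' b' a b c lam z"
    proof (cases "z \<in> cube")
      case False
      thus ?thesis unfolding sd using n1 n2 n3 n4 by simp
    next
      case True
      hence m: "(\<forall>k. 0 \<le> \<beta> $ k \<and> \<beta> $ k \<le> 1) \<and> 1 \<le> s \<and> s \<le> 2
        \<and> (\<forall>k. 1 \<le> \<nu> $ k \<and> \<nu> $ k \<le> 2) \<and> 1 \<le> t \<and> t \<le> 2" using mem_cube z by metis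
      have l1: "Ks \<le> ig_density \<alpha> (sigma_rate y X b' lam) s"
        unfolding Ks_def by (rule ig_lower[OF \<alpha>0 rate_bounds[OF lam] b']) (use m in auto)
      have l2: "Km \<le> (if 0 < s then mvn_density (post_mean y X lam) (s *\<^sub>R matrix_inv (AA X lam)) \<beta> else 0)"
        using Km(2)[OF box] m by auto
      have l3: "Kt \<le> tau_density a b c lam t" using Kt(2)[OF box] m by blast
      have l4: "Kn ^ CARD('p) \<le> (\<Prod>k\<in>UNIV. ig_density 1 (1 + t / lam $ k) (\<nu> $ k))"
      proof -
        have "(\<Prod>k\<in>(UNIV::'p set). Kn) \<le> (\<Prod>k\<in>UNIV. ig_density 1 (1 + t / lam $ k) (\<nu> $ k))"
        proof (rule prod_mono, intro conjI)
          fix k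
          show "0 \<le> Kn" using Kn0 by simp
          have t0: "0 \<le> t / lam $ k" using m lam by (simp add: less_imp_le)
          have il: "1 / lam $ k \<le> L" using box lam L by (simp add: divide_le_eq mult.commute)
          have "t / lam $ k = t * (1 / lam $ k)" by simp
          also have "\<dots> \<le> 2 * L" using m il lam by (intro mult_mono) (auto simp: less_imp_le)
          finally have t2: "t / lam $ k \<le> 2 * L" .
          show "Kn \<le> ig_density 1 (1 + t / lam $ k) (\<nu> $ k)"
            unfolding Kn_def by (rule ig_lower) (use m t0 t2 in auto)
        qed
        thus ?thesis by simp
      qed
      have "\<epsilon> \<le> ig_density \<alpha> (sigma_rate y X b' lam) s
       * (if 0 < s then mvn_density (post_mean y X lam) (s *\<^sub>R matrix_inv (AA X lam)) \<beta> else 0)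
       * tau_density a b c lam t
       * (\<Prod>k\<in>UNIV. ig_density 1 (1 + t / lam $ k) (\<nu> $ k))"
        unfolding \<epsilon>_def
        by (intro mult_mono l1 l2 l3 l4 mult_nonneg_nonneg n1 n2 n3 n4) (use Ks0 Km(1) Kt(1) Kn0 in auto)
      thus ?thesis unfolding sd using True by simp
    qed
  qed
qed


end
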